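(* Let $m\in\mathbb{N}$, $a>-1$, and $Q(x)=(x^{4}+2ax^{2}+1)^{-(m+1)}$. For real $y$ define $$Q_{1}(y)=\Big[Q\big(y+\sqrt{y^{2}+1}\big)+Q\big(y-\sqrt{y^{2}+1}\big)\Big]+\frac{y}{\sqrt{y^{2}+1}}\Big[Q\big(y+\sqrt{y^{2}+1}\big)-Q\big(y-\sqrt{y^{2}+1}\big)\Big].$$ Then $$Q_{1}(y)=\frac{T_{m}(2y)}{2^{m}(1+a+2y^{2})^{m+1}},\qquad\text{where } T_{m}(y)=\sum_{k=0}^{m}\binom{m+k}{m-k}y^{2k}.$$ *)

theory Defs
  imports Complex_Main
begin

definition Qf :: "nat \<Rightarrow> real \<Rightarrow> real \<Rightarrow> real" where
  "Qf m a x = 1 / (x ^ 4 + 2 * a * x ^ 2 + 1) ^ (m + 1)"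

definition Q1 :: "nat \<Rightarrow> real \<Rightarrow> real \<Rightarrow> real" where
  "Q1 m a y =
     (Qf m a (y + sqrt (y ^ 2 + 1)) + Qf m a (y - sqrt (y ^ 2 + 1)))
     + y / sqrt (y ^ 2 + 1) * (Qf m a (y + sqrt (y ^ 2 + 1)) - Qf m a (y - sqrt (y ^ 2 + 1)))"

definition Tpoly :: "nat \<Rightarrow> real \<Rightarrow> real" where
  "Tpoly m y = (\<Sum>k = 0..m. real ((m + k) choose (m - k)) * y ^ (2 * k))"

end

theory Submission
  imports Defs
begin

definition cc :: "nat \<Rightarrow> nat \<Rightarrow> real" where
  "cc m k = (if k \<le> m then real ((m+k) choose (m-k)) else 0)"

lemma Tp_ext: "m < n \<Longrightarrow> Tpoly m u = (\<Sum>k<n. cc m k * u^(2*k))"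
  unfolding Tpoly_def cc_def
  by (intro sum.mono_neutral_cong_left) auto

lemma cc0: "cc m 0 = 1" by (simp add: cc_def)

lemma coef: "cc (m+2) (Suc k) = cc (m+1) k + 2*cc (m+1) (Suc k) - cc m (Suc k)"
proof -
  consider "Suc k \<le> m" | "k = m" | "k = m+1" | "k > m+1" by linarith
  then show ?thesis
  proof cases
    case 1
    then obtain t where m: "m = Suc k + t" using le_Suc_ex by blast
    define N where "N = 2*k+t+2"
    have e1: "cc (m+2) (Suc k) = real (Suc (Suc N) choose Suc (Suc t))"
    proof -
      have "m+2+Suc k = Suc (Suc N)" "m+2-Suc k = Suc (Suc t)" unfolding m N_def by simp_all
      then show ?thesis unfolding cc_def using m by simp
    qed
    have e2: "cc (m+1) k = real (N choose Suc (Suc t))"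
    proof -
      have "m+1+k = N" "m+1-k = Suc (Suc t)" unfolding m N_def by simp_all
      then show ?thesis unfolding cc_def using m by simp
    qed
    have e3: "cc (m+1) (Suc k) = real (Suc N choose Suc t)"
    proof -
      have "m+1+Suc k = Suc N" "m+1-Suc k = Suc t" unfolding m N_def by simp_all
      then show ?thesis unfolding cc_def using m by simp
    qed
    have e4: "cc m (Suc k) = real (N choose t)"
    proof -
      have "m+Suc k = N" "m-Suc k = t" unfolding m N_def by simp_all
      then show ?thesis unfolding cc_def using m by simp
    qed
    have p1: "Suc (Suc N) choose Suc (Suc t) = (Suc N choose Suc t) + (Suc N choose Suc (Suc t))"
      by simp
    have p2: "Suc N choose Suc (Suc t) = (N choose Suc t) + (N choose Suc (Suc t))" by simp
    have p3: "Suc N choose Suc t = (N choose t) + (N choose Suc t)" by simp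
    have q1: "real (Suc (Suc N) choose Suc (Suc t)) = real (Suc N choose Suc t) + real (N choose Suc t) + real (N choose Suc (Suc t))"
      by (simp only: p1 p2 of_nat_add add.assoc)
    have q3: "real (Suc N choose Suc t) = real (N choose t) + real (N choose Suc t)"
      by (simp only: p3 of_nat_add)
    show ?thesis unfolding e1 e2 e3 e4 using q1 q3 by linarith
  next
    case 2
    then show ?thesis by (simp add: cc_def)
  next
    case 3
    then show ?thesis by (simp add: cc_def)
  next
    case 4
    then show ?thesis by (simp add: cc_def)
  qed
qed

lemma Trec: "Tpoly (m+2) u = (u^2+2) * Tpoly (m+1) u - Tpoly m u"
proof -
  have a: "Tpoly (m+2) u = (\<Sum>k<Suc (m+2). cc (m+2) k * u^(2*k))" by (rule Tp_ext) simp
  have b: "Tpoly (m+1) u = (\<Sum>k<Suc (m+2). cc (m+1) k * u^(2*k))" by (rule Tp_ext) simp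
  have b': "Tpoly (m+1) u = (\<Sum>k<m+2. cc (m+1) k * u^(2*k))" by (rule Tp_ext) simp
  have c: "Tpoly m u = (\<Sum>k<Suc (m+2). cc m k * u^(2*k))" by (rule Tp_ext) simp
  have sh: "\<And>f. (\<Sum>k<Suc (m+2). f k) = f 0 + (\<Sum>k<m+2. f (Suc k))"
    by (rule sum.lessThan_Suc_shift)
  have "Tpoly (m+2) u = 1 + (\<Sum>k<m+2. (cc (m+1) k + 2*cc (m+1) (Suc k) - cc m (Suc k)) * u^(2*Suc k))"
    unfolding a sh coef by (simp add: cc0)
  also have "\<dots> = 1 + u^2 * (\<Sum>k<m+2. cc (m+1) k * u^(2*k))
      + 2 * (\<Sum>k<m+2. cc (m+1) (Suc k) * u^(2*Suc k)) - (\<Sum>k<m+2. cc m (Suc k) * u^(2*Suc k))"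
  proof -
    have "\<And>k. (cc (m+1) k + 2*cc (m+1) (Suc k) - cc m (Suc k)) * u^(2*Suc k) =
      u^2*(cc (m+1) k*u^(2*k)) + 2*(cc (m+1) (Suc k)*u^(2*Suc k)) - cc m (Suc k)*u^(2*Suc k)"
      by (simp add: algebra_simps power2_eq_square)
    then show ?thesis by (simp only: sum_subtractf sum.distrib sum_distrib_left)
  qed
  also have "\<dots> = (u^2+2) * Tpoly (m+1) u - Tpoly m u"
  proof -
    have h1: "Tpoly (m+1) u = 1 + (\<Sum>k<m+2. cc (m+1) (Suc k) * u^(2*Suc k))"
      using b unfolding sh by (simp add: cc0)
    have h2: "Tpoly m u = 1 + (\<Sum>k<m+2. cc m (Suc k) * u^(2*Suc k))"
      using c unfolding sh by (simp add: cc0)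
    show ?thesis unfolding b'[symmetric] using h1 h2 by (simp add: ring_distribs)
  qed
  finally show ?thesis .
qed

lemma aux: "(p+q)*(X+Z) - (p*Z + q*X) = p*X + (q::real)*Z" by algebra

lemma aux2: assumes "A0 = w*T0" "A1 = w*T1" "A2 = v*A1 - A0" "T2 = v*T1 - T0" shows "A2 = w*(T2::real)"
  unfolding assms(3,4) assms(1,2) by algebra

lemma Aid: "x * z = 1 \<Longrightarrow> x^(2*m+1) + z^(2*m+1) = (x+z) * Tpoly m (x - z)"
proof -
  assume xz: "x * z = 1"
  have "x^(2*m+1) + z^(2*m+1) = (x+z) * Tpoly m (x - z) \<and>
        x^(2*(m+1)+1) + z^(2*(m+1)+1) = (x+z) * Tpoly (m+1) (x - z)"
  proof (induction m)
    case 0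
    have "x^3 + z^3 = (x+z)*((x-z)^2+1)"
      using xz by (simp add: algebra_simps power2_eq_square power3_eq_cube)
    then show ?case by (simp add: Tpoly_def)
  next
    case (Suc m)
    have r: "x^(2*(m+2)+1) + z^(2*(m+2)+1) =
       ((x-z)^2+2) * (x^(2*(m+1)+1) + z^(2*(m+1)+1)) - (x^(2*m+1) + z^(2*m+1))"
    proof -
      have "x^(2*(m+2)+1) = x^2 * x^(2*(m+1)+1)" "z^(2*(m+2)+1) = z^2 * z^(2*(m+1)+1)"
        by (simp_all add: power_add[symmetric])
      moreover have "x^2 * z^(2*(m+1)+1) = z^(2*m+1)" "z^2 * x^(2*(m+1)+1) = x^(2*m+1)"
      proof -
        have "x^2 * z^(2*(m+1)+1) = (x*z)^2 * z^(2*m+1)"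
          by (simp add: power_mult_distrib power_add[symmetric] algebra_simps)
        then show "x^2 * z^(2*(m+1)+1) = z^(2*m+1)" using xz by simp
        have "z^2 * x^(2*(m+1)+1) = (x*z)^2 * x^(2*m+1)"
          by (simp add: power_mult_distrib power_add[symmetric] algebra_simps)
        then show "z^2 * x^(2*(m+1)+1) = x^(2*m+1)" using xz by simp
      qed
      moreover have "(x-z)^2 + 2 = x^2 + z^2" using xz by (simp add: power2_eq_square algebra_simps)
      ultimately show ?thesis
        using aux[of "x^2" "z^2" "x^(2*(m+1)+1)" "z^(2*(m+1)+1)"] by (simp only: add.commute)
    qed
    have "x^(2*(m+2)+1) + z^(2*(m+2)+1) = (x+z) * Tpoly (m+2) (x - z)"
      by (rule aux2[OF conjunct1[OF Suc.IH] conjunct2[OF Suc.IH] r Trec[of m "x - z"]])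
    then show ?case using Suc.IH by (simp add: add.commute)
  qed
  then show ?thesis by blast
qed

theorem mainTheorem4:
  fixes m :: nat and a y :: real
  assumes "a > -1"
  shows "Q1 m a y = Tpoly m (2 * y) / (2 ^ m * (1 + a + 2 * y ^ 2) ^ (m + 1))"
proof -
  define s where "s = sqrt (y^2+1)"
  define C where "C = 1 + a + 2*y^2"
  define x where "x = y + s"
  define z where "z = s - y"
  have s2: "s^2 = y^2+1" unfolding s_def by simp
  have sp: "s > 0" unfolding s_def by (smt (verit) zero_le_power2 real_sqrt_gt_zero)
  have Cp: "C > 0" unfolding C_def using assms by (smt (verit) zero_le_power2)
  have xz: "x * z = 1" unfolding x_def z_def using s2 by (simp add: algebra_simps power2_eq_square)
  have xmz: "x - z = 2*y" unfolding x_def z_def by simp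
  have xpz: "x + z = 2*s" unfolding x_def z_def by simp
  have sq: "x^2 + z^2 = 4*y^2+2" unfolding x_def z_def using s2 by (simp add: algebra_simps power2_eq_square)
  have px: "x^4 + 2*a*x^2 + 1 = x^2 * (2*C)"
  proof -
    have "x^2*z^2 = 1" using xz by (metis power_mult_distrib one_power2)
    then have "x^4 + 2*a*x^2 + 1 = x^2*(x^2 + 2*a + z^2)" by (simp add: algebra_simps power_add[symmetric] numeral_eq_Suc)
    then show ?thesis using sq unfolding C_def by (simp add: algebra_simps)
  qed
  have pz: "(-z)^4 + 2*a*(-z)^2 + 1 = z^2 * (2*C)"
  proof -
    have "x^2*z^2 = 1" using xz by (metis power_mult_distrib one_power2)
    then have "(-z)^4 + 2*a*(-z)^2 + 1 = z^2*(x^2 + 2*a + z^2)" by (simp add: algebra_simps power_add[symmetric] numeral_eq_Suc)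
    then show ?thesis using sq unfolding C_def by (simp add: algebra_simps)
  qed
  have x2z2: "(x^2)^(m+1) * (z^2)^(m+1) = 1"
  proof -
    have "(x^2)^(m+1) * (z^2)^(m+1) = ((x*z)^2)^(m+1)" by (simp add: power_mult_distrib)
    then show ?thesis using xz by simp
  qed
  have xn: "x \<noteq> 0" "z \<noteq> 0" using xz by auto
  have zz: "(z^2)^(m+1) = 1/(x^2)^(m+1)" using x2z2 xn by (simp add: eq_divide_eq mult.commute)
  have xx: "(x^2)^(m+1) = 1/(z^2)^(m+1)" using x2z2 xn by (simp add: eq_divide_eq)
  have Qx: "Qf m a (y + s) = (z^2)^(m+1) / (2*C)^(m+1)"
    unfolding Qf_def x_def[symmetric] px zz
    by (simp add: power_mult_distrib)
  have ymz: "y - s = - z" unfolding z_def by simp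
  have Qz: "Qf m a (y - s) = (x^2)^(m+1) / (2*C)^(m+1)"
    unfolding Qf_def ymz pz xx
    by (simp add: power_mult_distrib)
  have f1: "1 + y/s = x/s" using sp unfolding x_def by (simp add: field_simps)
  have f2: "1 - y/s = z/s" using sp unfolding z_def by (simp add: field_simps)
  have "Q1 m a y = (1 + y/s) * Qf m a (y + s) + (1 - y/s) * Qf m a (y - s)"
    unfolding Q1_def s_def[symmetric] by (simp add: algebra_simps)
  also have "\<dots> = (x * (z^2)^(m+1) + z * (x^2)^(m+1)) / (s * (2*C)^(m+1))"
    unfolding f1 f2 Qx Qz using sp Cp by (simp add: field_simps)
  also have "x * (z^2)^(m+1) = z^(2*m+1)"
  proof -
    have "(z^2)^(m+1) = z^(Suc (2*m+1))" unfolding power_mult[symmetric] by (simp add: algebra_simps)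
    then have "x * (z^2)^(m+1) = (x*z) * z^(2*m+1)" by (simp only: power_Suc ac_simps)
    then show ?thesis using xz by simp
  qed
  also have "z * (x^2)^(m+1) = x^(2*m+1)"
  proof -
    have "(x^2)^(m+1) = x^(Suc (2*m+1))" unfolding power_mult[symmetric] by (simp add: algebra_simps)
    then have "z * (x^2)^(m+1) = (x*z) * x^(2*m+1)" by (simp only: power_Suc ac_simps)
    then show ?thesis using xz by simp
  qed
  also have "z^(2*m+1) + x^(2*m+1) = 2*s * Tpoly m (2*y)"
    using Aid[OF xz, of m] xmz xpz by simp
  finally have eq: "Q1 m a y = 2*s*Tpoly m (2*y) / (s*(2*C)^(m+1))" .
  have p2: "(2*C)^(m+1) = 2*(2^m*C^(m+1))" by (simp add: power_mult_distrib)
  have Dp: "2^m*C^(m+1) > 0" using Cp by simp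
  show ?thesis unfolding C_def[symmetric] eq p2 using sp Dp by simp
qed

end
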